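(* For $\mu\in[-\pi,\pi)$ and $\rho\in[0,1)$, let $\operatorname{WC}(\mu,\rho)$ denote the wrapped Cauchy distribution on $[-\pi,\pi)$ with density $\frac{1}{2\pi}\frac{1-\rho^2}{1+\rho^2-2\rho\cos(\theta-\mu)}$. Suppose $\Theta\mid\nu\sim\operatorname{WC}(\nu,\rho_1)$ with known $\rho_1\in[0,1)$, and the prior distribution of $\nu$ is $\operatorname{WC}(\mu_2,\rho_2)$ with $\mu_2\in[-\pi,\pi)$, $\rho_2\in[0,1)$. Then for $\mu_1\in[-\pi,\pi)$, the posterior distribution of $\nu$ given $\Theta=\mu_1$ has density $$f(\nu)=C\left[\{1+\rho_1^2-2\rho_1\cos(\nu-\mu_1)\}\{1+\rho_2^2-2\rho_2\cos(\nu-\mu_2)\}\right]^{-1},\qquad -\pi\le\nu<\pi,$$ where $C=\dfrac{(1-\rho_1^2)(1-\rho_2^2)\{1+\rho_1^2\rho_2^2-2\rho_1\rho_2\cos(\mu_1-\mu_2)\}}{2\pi(1-\rho_1^2\rho_2^2)}$. *)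

theory Defs
  imports "HOL-Analysis.Analysis"
begin

definition wc_density :: "real \<Rightarrow> real \<Rightarrow> real \<Rightarrow> real" where
  "wc_density mu rho theta =
     (1 / (2 * pi)) * ((1 - rho\<^sup>2) / (1 + rho\<^sup>2 - 2 * rho * cos (theta - mu)))"

definition posterior_density :: "real \<Rightarrow> real \<Rightarrow> real \<Rightarrow> real \<Rightarrow> real \<Rightarrow> real" where
  "posterior_density rho1 mu2 rho2 theta nu =
     wc_density nu rho1 theta * wc_density mu2 rho2 nu /
     integral {-pi..pi} (\<lambda>nu'. wc_density nu' rho1 theta * wc_density mu2 rho2 nu')"

end

theory Submission
  imports Defs "HOL-Complex_Analysis.Cauchy_Integral_Formula"
begin

lemma circle_cauchy:
  fixes f :: "complex \<Rightarrow> complex"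
  assumes holf: "f holomorphic_on cball 0 1" and w: "norm w < 1"
  shows "((\<lambda>t. f (cis t) * cis t / (cis t - w)) has_integral (2 * pi * f w)) {-pi..pi}"
proof -
  have hg: "(\<lambda>u. f (-u)) holomorphic_on cball 0 1"
    using holf by (auto intro!: holomorphic_on_compose_gen[where g=f and f=uminus, unfolded o_def] holomorphic_intros)
  have "((\<lambda>u. f (-u)/(u-(-w))) has_contour_integral (2 * of_real pi * \<i> * f (-(-w)))) (circlepath 0 1)"
    by (rule Cauchy_integral_circlepath_simple[OF hg]) (use w in simp)
  hence "((\<lambda>t. f (- cis t)/(cis t + w) * \<i> * cis t) has_integral (2 * of_real pi * \<i> * f w)) {0..2*pi}"
    unfolding circlepath_def by (subst (asm) has_contour_integral_part_circlepath_iff) auto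
  hence "((\<lambda>t. (f (- cis t)/(cis t + w) * \<i> * cis t) / \<i>) has_integral (2 * of_real pi * \<i> * f w) / \<i>) {0..2*pi}"
    by (rule has_integral_divide)
  hence 1: "((\<lambda>t. f (- cis t) * (- cis t)/((- cis t) - w)) has_integral (2 * pi * f w)) {0..2*pi}"
  proof -
    have nz: "cis t + w \<noteq> 0" for t
    proof
      assume "cis t + w = 0" hence "w = - cis t" by (simp add: add_eq_0_iff)
      with w show False by simp
    qed
    have e1: "(\<lambda>t. (f (- cis t)/(cis t + w) * \<i> * cis t) / \<i>) = (\<lambda>t. f (- cis t) * (- cis t)/((- cis t) - w))"
    proof -
      have nz2: "- cis t - w \<noteq> 0" for t using nz[of t] by (metis add.inverse_inverse diff_conv_add_uminus minus_add_distrib neg_equal_0_iff_equal)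
      show ?thesis using nz nz2 by (auto simp: fun_eq_iff field_simps)
    qed
    have e2: "(2 * of_real pi * \<i> * f w) / \<i> = 2 * pi * f w" by simp
    show ?thesis using \<open>((\<lambda>t. (f (- cis t)/(cis t + w) * \<i> * cis t) / \<i>) has_integral (2 * of_real pi * \<i> * f w) / \<i>) {0..2*pi}\<close> unfolding e1 e2 .
  qed
  let ?h = "\<lambda>t. f (cis t) * cis t / (cis t - w)"
  have "((?h \<circ> ((+) (-pi))) has_integral (2 * pi * f w)) (cbox 0 (2*pi))"
  proof -
    have ceq: "cis (x - pi) = - cis x" for x by (simp add: complex_eq_iff)
    show ?thesis using 1 by (simp add: o_def ceq)
  qed
  hence "(?h has_integral (2 * pi * f w)) (cbox (0 + -pi) (2*pi + -pi))"
    by (rule has_integral_shift_cbox_iff[THEN iffD1])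
  thus ?thesis by simp
qed
definition FF :: "complex \<Rightarrow> complex \<Rightarrow> complex" where
  "FF q z = (1 + q*z)/(1 - q*z)"

lemma den_pos:
  fixes r a :: real assumes "0 \<le> r" "r < 1"
  shows "1 + r\<^sup>2 - 2*r*cos a > 0"
proof -
  have "r * cos a \<le> r" using assms by (simp add: mult_left_le)
  hence "1 + r\<^sup>2 - 2*r*cos a \<ge> (1 - r)\<^sup>2" by (simp add: power2_eq_square algebra_simps)
  moreover have "(1-r)\<^sup>2 > 0" using assms by simp
  ultimately show ?thesis by linarith
qed

lemma Re_FF:
  fixes r a :: real assumes "0 \<le> r" "r < 1"
  shows "Re (FF (of_real r * cis a) 1) = (1 - r\<^sup>2)/(1 + r\<^sup>2 - 2*r*cos a)"
proof -
  have d: "(1 - r * cos a)\<^sup>2 + (r * sin a)\<^sup>2 = 1 + r\<^sup>2 - 2*r*cos a"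
    using sin_cos_squared_add[of a] by algebra
  have n: "(1 + r * cos a) * (1 - r * cos a) + (r * sin a) * (- (r * sin a)) = 1 - r\<^sup>2"
    using sin_cos_squared_add[of a] by algebra
  show ?thesis unfolding FF_def
    by (simp add: Re_divide cmod_power2 d[symmetric] n[symmetric])
qed


lemma FF_holo:
  assumes "norm q < 1"
  shows "FF q holomorphic_on cball 0 1"
proof -
  have "1 - q * z \<noteq> 0" if "z \<in> cball 0 1" for z
  proof
    assume "1 - q*z = 0" hence "q * z = 1" by simp
    hence "norm q * norm z = 1" by (metis norm_mult norm_one)
    moreover have "norm q * norm z \<le> norm q" using that mult_left_le[of "norm z" "norm q"] by simp
    ultimately show False using assms by simp
  qed
  thus ?thesis unfolding FF_def by (auto intro!: holomorphic_intros)
qed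

lemma cisr: "cis t * (of_real r * cis (-m)) = of_real r * cis (t - m)"
proof -
  have "cis t * (of_real r * cis (-m)) = of_real r * (cis t * cis (-m))" by (simp add: algebra_simps)
  also have "\<dots> = of_real r * cis (t - m)" by (simp add: cis_mult)
  finally show ?thesis .
qed

lemma FF_0 [simp]: "FF q 0 = 1" by (simp add: FF_def)

lemma Re_mult_Re: "Re a * Re b = Re ((a*b + a * cnj b)/2)"
  by (simp add: algebra_simps)

lemma main_int:
  fixes r1 r2 m1 m2 :: real
  assumes r1: "0 \<le> r1" "r1 < 1" and r2: "0 \<le> r2" "r2 < 1"
  shows "((\<lambda>t. Re (FF (of_real r1 * cis (t - m1)) 1) * Re (FF (of_real r2 * cis (t - m2)) 1))
          has_integral (2*pi*Re (FF (of_real (r1*r2) * cis (m2 - m1)) 1))) {-pi..pi}"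
proof -
  define q1 where "q1 = of_real r1 * cis (-m1)"
  define q2 where "q2 = of_real r2 * cis (-m2)"
  define p2 where "p2 = of_real r2 * cis m2"
  have nq1: "norm q1 < 1" using r1 by (simp add: q1_def norm_mult)
  have nq2: "norm q2 < 1" using r2 by (simp add: q2_def norm_mult)
  have np2: "norm p2 < 1" using r2 by (simp add: p2_def norm_mult)
  have h1: "FF q1 holomorphic_on cball 0 1" by (rule FF_holo[OF nq1])
  have h2: "FF q2 holomorphic_on cball 0 1" by (rule FF_holo[OF nq2])
  have h12: "(\<lambda>z. FF q1 z * FF q2 z) holomorphic_on cball 0 1"
    using h1 h2 by (auto intro!: holomorphic_intros)
  have I1: "((\<lambda>t. FF q1 (cis t) * FF q2 (cis t) * cis t / (cis t - 0)) has_integral (2 * pi * (FF q1 0 * FF q2 0))) {-pi..pi}"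
    by (rule circle_cauchy[OF h12]) simp
  have I2: "((\<lambda>t. FF q1 (cis t) * cis t / (cis t - p2)) has_integral (2 * pi * FF q1 p2)) {-pi..pi}"
    by (rule circle_cauchy[OF h1 np2])
  have I3: "((\<lambda>t. FF q1 (cis t) * cis t / (cis t - 0)) has_integral (2 * pi * FF q1 0)) {-pi..pi}"
    by (rule circle_cauchy[OF h1]) simp
  have I: "((\<lambda>t. (FF q1 (cis t) * FF q2 (cis t) * cis t / (cis t - 0)
        + 2 * (FF q1 (cis t) * cis t / (cis t - p2)) - FF q1 (cis t) * cis t / (cis t - 0)) / 2)
      has_integral ((2 * pi * (FF q1 0 * FF q2 0) + 2 * (2 * pi * FF q1 p2) - 2 * pi * FF q1 0) / 2)) {-pi..pi}"
    by (intro has_integral_divide has_integral_diff has_integral_add has_integral_mult_right I1 I2 I3)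
  have val: "(2 * pi * (FF q1 0 * FF q2 0) + 2 * (2 * pi * FF q1 p2) - 2 * pi * FF q1 0) / 2
      = 2 * pi * FF q1 p2" by (simp add: field_simps)
  have q1p2: "q1 * p2 = of_real (r1*r2) * cis (m2 - m1)"
    by (simp add: q1_def p2_def cis_mult algebra_simps)
  have IR: "((\<lambda>t. Re ((FF q1 (cis t) * FF q2 (cis t) * cis t / (cis t - 0)
        + 2 * (FF q1 (cis t) * cis t / (cis t - p2)) - FF q1 (cis t) * cis t / (cis t - 0)) / 2))
      has_integral (2*pi*Re (FF (of_real (r1*r2) * cis (m2 - m1)) 1))) {-pi..pi}"
  proof -
    have f: "FF q1 p2 = FF (of_real (r1*r2) * cis (m2 - m1)) 1" by (simp add: FF_def q1p2)
    have v2: "Re (2 * pi * FF q1 p2) = 2*pi*Re (FF (of_real (r1*r2) * cis (m2 - m1)) 1)"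
      unfolding f by simp
    show ?thesis using has_integral_Re[OF I] unfolding val v2 .
  qed
  have pw: "Re (FF (of_real r1 * cis (t - m1)) 1) * Re (FF (of_real r2 * cis (t - m2)) 1) =
     Re ((FF q1 (cis t) * FF q2 (cis t) * cis t / (cis t - 0)
        + 2 * (FF q1 (cis t) * cis t / (cis t - p2)) - FF q1 (cis t) * cis t / (cis t - 0)) / 2)" for t
  proof -
    define z where "z = cis t"
    have z0: "z \<noteq> 0" by (simp add: z_def)
    have zp: "z - p2 \<noteq> 0"
    proof
      assume "z - p2 = 0" hence "p2 = cis t" by (simp add: z_def)
      hence "norm p2 = 1" by simp
      with np2 show False by simp
    qed
    have e1: "FF (of_real r1 * cis (t - m1)) 1 = FF q1 z"
      proof -
      have "q1 * z = cis t * (of_real r1 * cis (-m1))" unfolding q1_def z_def by (rule mult.commute)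
      also have "\<dots> = of_real r1 * cis (t - m1)" by (rule cisr)
      finally show ?thesis by (simp add: FF_def)
    qed
    have e2: "FF (of_real r2 * cis (t - m2)) 1 = FF q2 z"
      proof -
      have "q2 * z = cis t * (of_real r2 * cis (-m2))" unfolding q2_def z_def by (rule mult.commute)
      also have "\<dots> = of_real r2 * cis (t - m2)" by (rule cisr)
      finally show ?thesis by (simp add: FF_def)
    qed
    have cz: "cnj z = 1 / z" by (simp add: z_def cis_cnj field_simps cis_mult)
    have cq2: "cnj q2 = p2" by (simp add: q2_def p2_def cis_cnj)
    have c2: "cnj (FF q2 z) = 2 * z / (z - p2) - 1"
    proof -
      have "cnj (FF q2 z) = (1 + p2 * (1/z)) / (1 - p2 * (1/z))"
        by (simp add: FF_def cz[symmetric] cq2[symmetric])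
      also have "\<dots> = (z + p2) / (z - p2)" using z0 zp by (simp add: field_simps)
      also have "\<dots> = 2 * z / (z - p2) - 1" using zp by (simp add: field_simps)
      finally show ?thesis .
    qed
    have "Re (FF q1 z) * Re (FF q2 z) = Re ((FF q1 z * FF q2 z + FF q1 z * cnj (FF q2 z))/2)"
      by (rule Re_mult_Re)
    also have "\<dots> = Re ((FF q1 z * FF q2 z * z / (z - 0)
        + 2 * (FF q1 z * z / (z - p2)) - FF q1 z * z / (z - 0)) / 2)"
      using z0 zp unfolding c2 by (simp add: field_simps)
    finally show ?thesis unfolding e1 e2 z_def .
  qed
  show ?thesis using IR unfolding pw[symmetric] .
qed

lemma alg: fixes a b d1 d2 k e p :: real
  shows "d1>0 \<Longrightarrow> d2>0 \<Longrightarrow> k>0 \<Longrightarrow> e>0 \<Longrightarrow> p>0 \<Longrightarrow>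
  (1/(2*p) * (a/d1)) * (1/(2*p)*(b/d2)) / ((1/(2*p))*(1/(2*p))*(2*p*(k/e))) = (a*b*e/(2*p*k))/(d1*d2)"
  by (simp add: field_simps)

lemma cos_sym: "cos (a - b) = cos (b - a)"
  by (metis cos_minus minus_diff_eq)

theorem theorem7:
  fixes rho1 rho2 mu1 mu2 nu :: real
  assumes "rho1 \<in> {0..<1}" and "rho2 \<in> {0..<1}"
    and "mu1 \<in> {-pi..<pi}" and "mu2 \<in> {-pi..<pi}"
    and "nu \<in> {-pi..<pi}"
  shows "posterior_density rho1 mu2 rho2 mu1 nu =
    ((1 - rho1\<^sup>2) * (1 - rho2\<^sup>2) * (1 + rho1\<^sup>2 * rho2\<^sup>2 - 2 * rho1 * rho2 * cos (mu1 - mu2))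
       / (2 * pi * (1 - rho1\<^sup>2 * rho2\<^sup>2)))
    / ((1 + rho1\<^sup>2 - 2 * rho1 * cos (nu - mu1)) * (1 + rho2\<^sup>2 - 2 * rho2 * cos (nu - mu2)))"
proof -
  have r1: "0 \<le> rho1" "rho1 < 1" and r2: "0 \<le> rho2" "rho2 < 1" using assms by auto
  have r12: "0 \<le> rho1 * rho2" "rho1 * rho2 < 1"
  proof -
    show "0 \<le> rho1 * rho2" using r1 r2 by simp
    have "rho1*rho2 \<le> rho1" using mult_left_le[of rho2 rho1] r1 r2 by simp
    thus "rho1 * rho2 < 1" using r1 by simp
  qed
  have M: "((\<lambda>t. Re (FF (of_real rho1 * cis (t - mu1)) 1) * Re (FF (of_real rho2 * cis (t - mu2)) 1))
          has_integral (2*pi*Re (FF (of_real (rho1*rho2) * cis (mu2 - mu1)) 1))) {-pi..pi}"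
    by (rule main_int[OF r1 r2])
  define E where "E = 1 + (rho1*rho2)\<^sup>2 - 2*(rho1*rho2)*cos (mu2 - mu1)"
  have Epos: "E > 0" unfolding E_def by (rule den_pos[OF r12])
  have M2: "((\<lambda>t. (1/(2*pi)) * (1/(2*pi)) * (Re (FF (of_real rho1 * cis (t - mu1)) 1) * Re (FF (of_real rho2 * cis (t - mu2)) 1)))
          has_integral ((1/(2*pi)) * (1/(2*pi)) * (2*pi*((1 - (rho1*rho2)\<^sup>2)/E)))) {-pi..pi}"
    using has_integral_mult_right[OF M, of "(1/(2*pi)) * (1/(2*pi))"]
    unfolding E_def using Re_FF[OF r12] of_real_mult by metis
  have pw: "wc_density nu' rho1 mu1 * wc_density mu2 rho2 nu' =
     (1/(2*pi)) * (1/(2*pi)) * (Re (FF (of_real rho1 * cis (nu' - mu1)) 1) * Re (FF (of_real rho2 * cis (nu' - mu2)) 1))" for nu'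
    unfolding wc_density_def Re_FF[OF r1] Re_FF[OF r2] by (simp add: cos_sym[of mu1 nu'])
  have Iv: "integral {-pi..pi} (\<lambda>nu'. wc_density nu' rho1 mu1 * wc_density mu2 rho2 nu')
      = (1/(2*pi)) * (1/(2*pi)) * (2*pi*((1 - (rho1*rho2)\<^sup>2)/E))"
    unfolding pw using M2 by (rule integral_unique)
  have D1: "1 + rho1\<^sup>2 - 2 * rho1 * cos (nu - mu1) > 0" by (rule den_pos[OF r1])
  have D2: "1 + rho2\<^sup>2 - 2 * rho2 * cos (nu - mu2) > 0" by (rule den_pos[OF r2])
  have p12: "1 - (rho1*rho2)\<^sup>2 > 0" using r12 by (simp add: power_less_one_iff abs_square_less_1)
  have Ee: "E = 1 + rho1\<^sup>2 * rho2\<^sup>2 - 2 * rho1 * rho2 * cos (mu1 - mu2)"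
    unfolding E_def by (simp add: cos_sym[of mu2 mu1] power_mult_distrib)
  have p12': "1 - rho1\<^sup>2*rho2\<^sup>2 > 0" using p12 by (simp add: power_mult_distrib)
  show ?thesis
    unfolding posterior_density_def Iv
    unfolding wc_density_def cos_sym[of mu1 nu] power_mult_distrib Ee[symmetric]
    by (rule alg[OF D1 D2 p12' Epos pi_gt_zero])
qed

end
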